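(* For every state $p$, the state $p$ itself is a vertex (extreme point) of the convex polytope $p^{TP}=\{Tp : T\in TP(d)\}$.
   Context: Fix $d\ge 2$, $\beta\in(0,\infty)$ and pairwise distinct reals $E_0=0,E_1,\dots,E_{d-1}$. Put $q_{m,n}=e^{-\beta(E_m-E_n)}$, $Z=\sum_j q_{j,0}$, $g_i=q_{i,0}/Z$. A state is a probability vector in $\mathbb{R}^d$. $TP(d)$ is the set of $d\times d$ real matrices with non-negative entries, columns summing to $1$, and $Tg=g$. *)

theory Defs
  imports "HOL-Analysis.Analysis"
begin

text \<open>Energies E indexed by the finite type 'n, with a distinguished ground index i0 (E i0 = 0).\<close>

definition qmn :: "real \<Rightarrow> ('n \<Rightarrow> real) \<Rightarrow> 'n \<Rightarrow> 'n \<Rightarrow> real" where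
  "qmn \<beta> E m n = exp (- \<beta> * (E m - E n))"

definition gibbs :: "real \<Rightarrow> ('n::finite \<Rightarrow> real) \<Rightarrow> 'n \<Rightarrow> real ^ 'n" where
  "gibbs \<beta> E i0 = (\<chi> i. qmn \<beta> E i i0 / (\<Sum>j\<in>UNIV. qmn \<beta> E j i0))"

definition is_state :: "real ^ 'n::finite \<Rightarrow> bool" where
  "is_state p \<longleftrightarrow> (\<forall>i. 0 \<le> p $ i) \<and> (\<Sum>i\<in>UNIV. p $ i) = 1"

definition TP :: "real \<Rightarrow> ('n::finite \<Rightarrow> real) \<Rightarrow> 'n \<Rightarrow> (real ^ 'n ^ 'n) set" where
  "TP \<beta> E i0 = {T. (\<forall>i j. 0 \<le> T $ i $ j) \<and> (\<forall>j. (\<Sum>i\<in>UNIV. T $ i $ j) = 1)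
                    \<and> T *v gibbs \<beta> E i0 = gibbs \<beta> E i0}"

definition TP_orbit :: "real \<Rightarrow> ('n::finite \<Rightarrow> real) \<Rightarrow> 'n \<Rightarrow> real ^ 'n \<Rightarrow> (real ^ 'n) set" where
  "TP_orbit \<beta> E i0 p = {T *v p | T. T \<in> TP \<beta> E i0}"

end

theory Submission
  imports Defs
begin

lemma cs_weighted:
  fixes w g p :: "'a \<Rightarrow> real"
  assumes w: "\<And>j. 0 \<le> w j" and g: "\<And>j. 0 < g j"
  shows "(\<Sum>j\<in>I. w j * p j)\<^sup>2 \<le> (\<Sum>j\<in>I. w j * g j) * (\<Sum>j\<in>I. w j * (p j)\<^sup>2 / g j)"
proof -
  have ab: "sqrt (w j * g j) * (sqrt (w j / g j) * p j) = w j * p j" for j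
  proof -
    have "sqrt (w j * g j) * sqrt (w j / g j) = sqrt (w j * g j * (w j / g j))"
      by (rule real_sqrt_mult[symmetric])
    also have "w j * g j * (w j / g j) = (w j)\<^sup>2" using g[of j] by (simp add: power2_eq_square)
    finally show ?thesis using w[of j] by simp
  qed
  have a2: "(sqrt (w j * g j))\<^sup>2 = w j * g j" for j using w[of j] g[of j] by simp
  have b2: "(sqrt (w j / g j) * p j)\<^sup>2 = w j * (p j)\<^sup>2 / g j" for j
    using w[of j] g[of j] by (simp add: power_mult_distrib)
  show ?thesis
    using Cauchy_Schwarz_ineq_sum[of "\<lambda>j. sqrt (w j * g j)" "\<lambda>j. sqrt (w j / g j) * p j" I]
    by (simp add: ab a2 b2)
qed

definition Qf :: "real ^ 'n \<Rightarrow> real ^ 'n::finite \<Rightarrow> real" where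
  "Qf g q = (\<Sum>i\<in>UNIV. (q $ i)\<^sup>2 / g $ i)"

lemma Qf_mono:
  fixes g p :: "real ^ 'n::finite" and T :: "real ^ 'n ^ 'n"
  assumes g: "\<And>i. 0 < g $ i" and T0: "\<And>i j. 0 \<le> T $ i $ j"
    and Tc: "\<And>j. (\<Sum>i\<in>UNIV. T $ i $ j) = 1" and Tg: "T *v g = g"
  shows "Qf g (T *v p) \<le> Qf g p"
proof -
  have gi: "(\<Sum>j\<in>UNIV. T $ i $ j * g $ j) = g $ i" for i
    using arg_cong[OF Tg, of "\<lambda>v. v $ i"] by (simp add: matrix_vector_mult_def)
  have each: "((T *v p) $ i)\<^sup>2 / g $ i \<le> (\<Sum>j\<in>UNIV. T $ i $ j * (p $ j)\<^sup>2 / g $ j)" for i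
  proof -
    have "((T *v p) $ i)\<^sup>2 \<le> g $ i * (\<Sum>j\<in>UNIV. T $ i $ j * (p $ j)\<^sup>2 / g $ j)"
      using cs_weighted[of "\<lambda>j. T $ i $ j" "\<lambda>j. g $ j" "\<lambda>j. p $ j" UNIV] T0 g gi[of i]
      by (simp add: matrix_vector_mult_def)
    then show ?thesis using g[of i] by (simp add: divide_simps mult.commute)
  qed
  have "Qf g (T *v p) \<le> (\<Sum>i\<in>UNIV. \<Sum>j\<in>UNIV. T $ i $ j * (p $ j)\<^sup>2 / g $ j)"
    unfolding Qf_def by (rule sum_mono) (rule each)
  also have "\<dots> = (\<Sum>j\<in>UNIV. \<Sum>i\<in>UNIV. T $ i $ j * (p $ j)\<^sup>2 / g $ j)"
    by (rule sum.swap)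
  also have "\<dots> = (\<Sum>j\<in>UNIV. (\<Sum>i\<in>UNIV. T $ i $ j) * ((p $ j)\<^sup>2 / g $ j))"
    by (rule sum.cong, simp, subst sum_distrib_right, simp)
  also have "\<dots> = Qf g p" by (simp add: Tc Qf_def)
  finally show ?thesis .
qed

lemma Qf_strict:
  fixes g a b :: "real ^ 'n::finite"
  assumes g: "\<And>i. 0 < g $ i" and ab: "a \<noteq> b" and u: "0 < u" "u < 1"
  shows "Qf g ((1 - u) *\<^sub>R a + u *\<^sub>R b) < (1 - u) * Qf g a + u * Qf g b"
proof -
  have id: "(1 - u) * ((a $ i)\<^sup>2 / g $ i) + u * ((b $ i)\<^sup>2 / g $ i)
      - (((1 - u) *\<^sub>R a + u *\<^sub>R b) $ i)\<^sup>2 / g $ i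
      = u * (1 - u) * ((a $ i - b $ i)\<^sup>2 / g $ i)" for i
    using g[of i] by (simp add: field_simps power2_eq_square)
  obtain k where k: "a $ k \<noteq> b $ k" using ab by (auto simp: vec_eq_iff)
  have "0 < (\<Sum>i\<in>UNIV. (a $ i - b $ i)\<^sup>2 / g $ i)"
  proof (rule sum_pos2[of UNIV k])
    show "0 < (a $ k - b $ k)\<^sup>2 / g $ k" using k g[of k] by simp
    show "\<And>i. i \<in> UNIV \<Longrightarrow> 0 \<le> (a $ i - b $ i)\<^sup>2 / g $ i" using g
      by (simp add: less_imp_le)
  qed auto
  then have "0 < u * (1 - u) * (\<Sum>i\<in>UNIV. (a $ i - b $ i)\<^sup>2 / g $ i)" using u by simp
  also have "\<dots> = (\<Sum>i\<in>UNIV. (1 - u) * ((a $ i)\<^sup>2 / g $ i) + u * ((b $ i)\<^sup>2 / g $ i)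
      - (((1 - u) *\<^sub>R a + u *\<^sub>R b) $ i)\<^sup>2 / g $ i)"
    by (subst sum_distrib_left, rule sum.cong, simp, rule id[symmetric])
  also have "\<dots> = (1 - u) * Qf g a + u * Qf g b - Qf g ((1 - u) *\<^sub>R a + u *\<^sub>R b)"
    by (simp add: Qf_def sum_subtractf sum.distrib sum_distrib_left)
  finally show ?thesis by simp
qed

theorem mainTheorem3:
  fixes \<beta> :: real and E :: "'n::finite \<Rightarrow> real" and i0 :: 'n and p :: "real ^ 'n"
  assumes "CARD('n) \<ge> 2"
    and "0 < \<beta>"
    and "E i0 = 0"
    and "inj E"
    and "is_state p"
  shows "p extreme_point_of (TP_orbit \<beta> E i0 p)"
proof -
  define g where "g = gibbs \<beta> E i0"
  have Zpos: "0 < (\<Sum>j\<in>UNIV. qmn \<beta> E j i0)"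
    by (rule sum_pos) (auto simp: qmn_def)
  have g: "0 < g $ i" for i
    using Zpos by (simp add: g_def gibbs_def qmn_def)
  have inS: "\<And>q. q \<in> TP_orbit \<beta> E i0 p \<Longrightarrow> Qf g q \<le> Qf g p"
    unfolding TP_orbit_def TP_def g_def[symmetric]
    using Qf_mono[OF g] by blast
  have m1: "mat 1 *v gibbs \<beta> E i0 = gibbs \<beta> E i0" by simp
  have m2: "\<forall>i j. 0 \<le> (mat 1 :: real^'n^'n) $ i $ j" by (simp add: mat_def)
  have m3: "\<forall>j. (\<Sum>i\<in>UNIV. (mat 1 :: real^'n^'n) $ i $ j) = 1" by (simp add: mat_def)
  have "mat 1 \<in> TP \<beta> E i0"
    unfolding TP_def using m1 m2 m3 by blast
  then have pin: "p \<in> TP_orbit \<beta> E i0 p"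
    unfolding TP_orbit_def by force
  show ?thesis
    unfolding extreme_point_of_def
  proof (intro conjI pin ballI notI)
    fix a b assume a: "a \<in> TP_orbit \<beta> E i0 p" and b: "b \<in> TP_orbit \<beta> E i0 p"
      and "p \<in> open_segment a b"
    then obtain u where ab: "a \<noteq> b" and u: "0 < u" "u < 1" and pe: "p = (1 - u) *\<^sub>R a + u *\<^sub>R b"
      by (auto simp: in_segment)
    have "Qf g p < (1 - u) * Qf g a + u * Qf g b"
      using Qf_strict[OF g ab u] pe by simp
    also have "\<dots> \<le> (1 - u) * Qf g p + u * Qf g p"
      using inS[OF a] inS[OF b] u
      by (intro add_mono mult_left_mono) auto
    finally show False by (simp add: algebra_simps)
  qed
qed

end
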